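(* Let $N$ be an outer-labeled planar semi-directed network on $X$. Then $\mathrm{Split}(\mathcal T(N))$ is a circular split system congruent with every circular order of $X$ induced by $N$.
   Context: A (binary) rooted phylogenetic network on $X$ is a rooted DAG whose root has in-degree 0, out-degree 2, whose leaves (in-degree 1, out-degree 0) are bijectively labeled by $X$, and whose other nodes have (in,out)-degree $(1,2)$ (tree nodes) or $(2,1)$ (hybrid nodes), with the root being the least stable ancestor of $X$. Edges into hybrid nodes are hybrid edges. A semi-directed network is obtained by undirecting all non-hybrid edges and suppressing the root. It is outer-labeled planar if it has a planar embedding with all leaves on the unbounded face; such an embedding lists the leaves around the unbounded face in a circular order, and any circular order arising this way is said to be induced by $N$. A phylogenetic tree is a semi-directed network without hybrid nodes; $T$ is displayed by $N$ if it is obtained by deleting one hybrid edge per hybrid node, then repeatedly deleting unlabeled leaves and suppressing degree-2 nodes; $\mathcal T(N)$ is the set of displayed trees. $\mathrm{Split}(T)$ is the set of bipartitions of $X$ induced by edges of $T$, and $\mathrm{Split}(\mathcal T(N))=\bigcup_{T\in\mathcal T(N)}\mathrm{Split}(T)$. For a circular order $\mathcal C=(x_0,\dots,x_n=x_0)$ (indices mod $n$) and $i\ne j$, $S_{ij}=\{x_{i+1},\dots,x_j\}|\{x_{j+1},\dots,x_i\}$; a split system is circular and congruent with $\mathcal C$ if all its splits are of the form $S_{ij}$ for $\mathcal C$. *)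

theory Defs
  imports "HOL-Analysis.Analysis"
begin

text \<open>A network is given by a finite vertex set V, a set of arcs A (pairs (u,v) meaning u -> v),
  a root r and the leaf set X (leaves are identified with their labels).\<close>

definition indeg :: "('v \<times> 'v) set \<Rightarrow> 'v \<Rightarrow> nat" where
  "indeg A v = card {u. (u, v) \<in> A}"

definition outdeg :: "('v \<times> 'v) set \<Rightarrow> 'v \<Rightarrow> nat" where
  "outdeg A v = card {w. (v, w) \<in> A}"

definition rooted_network :: "'v set \<Rightarrow> ('v \<times> 'v) set \<Rightarrow> 'v \<Rightarrow> 'v set \<Rightarrow> bool" where
  "rooted_network V A r X \<longleftrightarrow>
     finite V \<and> A \<subseteq> V \<times> V \<and> (\<forall>v. (v, v) \<notin> A\<^sup>+) \<and>
     r \<in> V \<and> indeg A r = 0 \<and> outdeg A r = 2 \<and>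
     X = {v \<in> V. indeg A v = 1 \<and> outdeg A v = 0} \<and>
     (\<forall>v \<in> V - {r}. (indeg A v, outdeg A v) \<in> {(1, 0), (1, 2), (2, 1)}) \<and>
     \<comment> \<open>the root is the least stable ancestor of X: no other vertex lies on all
         root-to-leaf paths\<close>
     (\<forall>v \<in> V - {r}. \<exists>x \<in> X. (r, x) \<in> (A \<inter> ((- {v}) \<times> (- {v})))\<^sup>*)"

definition hybrid_edges :: "('v \<times> 'v) set \<Rightarrow> ('v \<times> 'v) set" where
  "hybrid_edges A = {(u, v) \<in> A. indeg A v = 2}"

text \<open>Underlying undirected graph (edges as 2-element sets).  Undirecting the non-hybrid
  edges does not change the underlying graph; hybrid edges keep their direction only
  through the set hybrid_edges.\<close>

definition und_edges :: "('v \<times> 'v) set \<Rightarrow> 'v set set" where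
  "und_edges A = {{u, v} | u v. (u, v) \<in> A}"

definition deletion_choice :: "('v \<times> 'v) set \<Rightarrow> ('v \<times> 'v) set \<Rightarrow> bool" where
  "deletion_choice A D \<longleftrightarrow> D \<subseteq> hybrid_edges A \<and>
     (\<forall>h. indeg A h = 2 \<longrightarrow> card {u. (u, h) \<in> D} = 1)"

definition prune_step :: "'v set \<Rightarrow> ('v set \<times> 'v set set) \<Rightarrow> ('v set \<times> 'v set set) \<Rightarrow> bool" where
  "prune_step X G G' \<longleftrightarrow> (\<exists>v e. v \<in> fst G \<and> v \<notin> X \<and> {f \<in> snd G. v \<in> f} = {e} \<and>
      G' = (fst G - {v}, snd G - {e}))"

definition suppress_step :: "'v set \<Rightarrow> ('v set \<times> 'v set set) \<Rightarrow> ('v set \<times> 'v set set) \<Rightarrow> bool" where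
  "suppress_step X G G' \<longleftrightarrow> (\<exists>v a b. v \<in> fst G \<and> v \<notin> X \<and> a \<noteq> b \<and> a \<noteq> v \<and> b \<noteq> v \<and>
      {f \<in> snd G. v \<in> f} = {{a, v}, {v, b}} \<and>
      G' = (fst G - {v}, (snd G - {{a, v}, {v, b}}) \<union> {{a, b}}))"

definition reduce_step :: "'v set \<Rightarrow> ('v set \<times> 'v set set) \<Rightarrow> ('v set \<times> 'v set set) \<Rightarrow> bool" where
  "reduce_step X G G' \<longleftrightarrow> prune_step X G G' \<or> suppress_step X G G'"

definition displayed_tree :: "'v set \<Rightarrow> ('v \<times> 'v) set \<Rightarrow> 'v set \<Rightarrow> ('v set \<times> 'v set set) \<Rightarrow> bool" where
  "displayed_tree V A X T \<longleftrightarrow> (\<exists>D. deletion_choice A D \<and>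
      (reduce_step X)\<^sup>*\<^sup>* (V, und_edges (A - D)) T \<and> \<not> (\<exists>T'. reduce_step X T T'))"

definition edge_rel :: "'v set set \<Rightarrow> ('v \<times> 'v) set" where
  "edge_rel F = {(a, b). {a, b} \<in> F}"

definition component :: "'v set set \<Rightarrow> 'v \<Rightarrow> 'v set" where
  "component F u = {w. (u, w) \<in> (edge_rel F)\<^sup>*}"

text \<open>Splits are bipartitions, represented as the unordered pair of their two sides.\<close>

definition tree_splits :: "'v set \<Rightarrow> ('v set \<times> 'v set set) \<Rightarrow> 'v set set set" where
  "tree_splits X T = {{X \<inter> component (snd T - {e}) u, X - component (snd T - {e}) u} | e u.
      e \<in> snd T \<and> u \<in> e}"

definition displayed_splits :: "'v set \<Rightarrow> ('v \<times> 'v) set \<Rightarrow> 'v set \<Rightarrow> 'v set set set" where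
  "displayed_splits V A X = \<Union> {tree_splits X T | T. displayed_tree V A X T}"

definition circular_order :: "'v set \<Rightarrow> 'v list \<Rightarrow> bool" where
  "circular_order X xs \<longleftrightarrow> distinct xs \<and> set xs = X"

text \<open>For xs = [x_0, ..., x_(n-1)] (indices mod n): the side x_(i+1), ..., x_j.\<close>

definition circ_part :: "'v list \<Rightarrow> nat \<Rightarrow> nat \<Rightarrow> 'v set" where
  "circ_part xs i j = {xs ! (k mod length xs) | k.
      i < k \<and> k \<le> (if i < j then j else j + length xs)}"

definition circ_split :: "'v list \<Rightarrow> nat \<Rightarrow> nat \<Rightarrow> 'v set set" where
  "circ_split xs i j = {circ_part xs i j, set xs - circ_part xs i j}"

definition congruent :: "'v set set set \<Rightarrow> 'v list \<Rightarrow> bool" where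
  "congruent S xs \<longleftrightarrow> (\<forall>s \<in> S. \<exists>i j. i < length xs \<and> j < length xs \<and> i \<noteq> j \<and>
      s = circ_split xs i j)"

definition circular_split_system :: "'v set \<Rightarrow> 'v set set set \<Rightarrow> bool" where
  "circular_split_system X S \<longleftrightarrow> (\<exists>xs. circular_order X xs \<and> congruent S xs)"

text \<open>The circular order xs of the leaves is induced by the
  embedding if the drawing lies inside a disc of radius R and the leaves can be joined by
  pairwise disjoint arcs, running through the complement of the drawing (hence through the
  unbounded face), to points of the circle of radius R met in the (counterclockwise)
  order xs.\<close>

definition induces_circular_order :: "'v set \<Rightarrow> 'v set set \<Rightarrow> 'v list \<Rightarrow> bool" where
  "induces_circular_order V E xs \<longleftrightarrow>
    (\<exists>(pos :: 'v \<Rightarrow> complex) (\<gamma> :: 'v set \<Rightarrow> real \<Rightarrow> complex)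
       (\<delta> :: nat \<Rightarrow> real \<Rightarrow> complex) (R :: real) (\<theta> :: nat \<Rightarrow> real).
      inj_on pos V \<and>
      (\<forall>e \<in> E. arc (\<gamma> e) \<and> {pathstart (\<gamma> e), pathfinish (\<gamma> e)} = pos ` e) \<and>
      (\<forall>e \<in> E. \<forall>v \<in> V. pos v \<in> path_image (\<gamma> e) \<longrightarrow> v \<in> e) \<and>
      (\<forall>e \<in> E. \<forall>e' \<in> E. e \<noteq> e' \<longrightarrow>
          path_image (\<gamma> e) \<inter> path_image (\<gamma> e') \<subseteq> pos ` (e \<inter> e')) \<and>
      pos ` V \<union> (\<Union>e \<in> E. path_image (\<gamma> e)) \<subseteq> ball 0 R \<and>
      (\<forall>k < length xs. arc (\<delta> k) \<and> pathstart (\<delta> k) = pos (xs ! k) \<and>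
          pathfinish (\<delta> k) = complex_of_real R * cis (\<theta> k) \<and>
          path_image (\<delta> k) \<inter> (pos ` V \<union> (\<Union>e \<in> E. path_image (\<gamma> e))) = {pos (xs ! k)} \<and>
          path_image (\<delta> k) - {pathfinish (\<delta> k)} \<subseteq> ball 0 R \<and>
          0 \<le> \<theta> k \<and> \<theta> k < 2 * pi) \<and>
      (\<forall>k l. k < l \<and> l < length xs \<longrightarrow>
          path_image (\<delta> k) \<inter> path_image (\<delta> l) = {} \<and> \<theta> k < \<theta> l))"

text \<open>The embedded graph
  is the underlying graph of the semi-directed network; we keep the (degree-2, unlabeled) root
  as a subdivision vertex instead of suppressing it, which changes neither the embeddings up to
  subdivision nor the induced circular orders.\<close>

definition induced_circular_order :: "'v set \<Rightarrow> ('v \<times> 'v) set \<Rightarrow> 'v set \<Rightarrow> 'v list \<Rightarrow> bool" where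
  "induced_circular_order V A X xs \<longleftrightarrow>
     circular_order X xs \<and> induces_circular_order V (und_edges A) xs"

definition outer_labeled_planar :: "'v set \<Rightarrow> ('v \<times> 'v) set \<Rightarrow> 'v set \<Rightarrow> bool" where
  "outer_labeled_planar V A X \<longleftrightarrow> (\<exists>xs. induced_circular_order V A X xs)"

end

theory Submission
  imports Defs
begin


lemma mob_real:
  fixes q :: complex and p :: real
  assumes q: "q \<noteq> 0" and c: "cos p \<noteq> 1"
  shows "\<i> * (q + q * cis p) / (q - q * cis p) = complex_of_real (- sin p / (1 - cos p))"
proof -
  have ne: "1 - cis p \<noteq> 0"
    using c by (auto simp: complex_eq_iff)
  have e1: "\<i> * (q + q * cis p) / (q - q * cis p) = \<i> * (1 + cis p) / (1 - cis p)"
    using q ne by (simp add: field_simps)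
  have cisne: "cis p \<noteq> 1" using ne by simp
  have c1: "1 - cos p \<noteq> 0" using c by simp
  have eq: "\<i> * (1 + cis p) = complex_of_real (- sin p / (1 - cos p)) * (1 - cis p)"
  proof -
    have s2: "(sin p)^2 = 1 - (cos p)^2" by (simp add: sin_squared_eq)
    have "sin p * sin p / (1 - cos p) = 1 + cos p"
      using c1 s2 by (simp add: field_simps power2_eq_square)
    then show ?thesis using c1 by (simp add: complex_eq_iff field_simps)
  qed
  show ?thesis unfolding e1 by (simp only: eq) (simp add: ne cisne c)
qed

lemma cot_mono:
  fixes a b :: real
  assumes "0 < a" "a < b" "b < 2*pi"
  shows "- sin a / (1 - cos a) < - sin b / (1 - cos b)"
proof -
  define h k where "h = a/2" and "k = b/2"
  have a: "a = 2*h" and b: "b = 2*k" using h_def k_def by auto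
  have hk: "0 < h" "h < k" "k < pi" using assms h_def k_def by auto
  have sh: "sin h > 0" using hk by (intro sin_gt_zero) auto
  have sk: "sin k > 0" using hk by (intro sin_gt_zero) auto
  have d: "sin (k - h) > 0" using hk by (intro sin_gt_zero) auto
  have e: "\<And>t::real. sin t > 0 \<Longrightarrow> - sin (2*t) / (1 - cos (2*t)) = - cos t / sin t"
  proof -
    fix t :: real assume st: "sin t > 0"
    have x1: "1 - cos (2*t) = 2 * (sin t)^2" by (simp add: cos_double_sin)
    have x2: "sin (2*t) = 2 * sin t * cos t" by (simp add: sin_double)
    have "- sin (2*t) / (1 - cos (2*t)) = - (2 * sin t * cos t) / (2 * (sin t)^2)"
      unfolding x1 x2 by simp
    also have "\<dots> = - cos t / sin t" using st by (simp add: field_simps power2_eq_square)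
    finally show "- sin (2*t) / (1 - cos (2*t)) = - cos t / sin t" .
  qed
  have "cos k * sin h < cos h * sin k"
    using d by (simp add: sin_diff mult.commute)
  then have "- cos h / sin h < - cos k / sin k"
    using sh sk by (simp add: field_simps)
  then show ?thesis using e[OF sh] e[OF sk] a b by simp
qed

lemma cos_ne_1:
  fixes x :: real assumes "0 < x" "x < 2*pi" shows "cos x \<noteq> 1"
proof
  assume c: "cos x = 1"
  have "sin (x/2) > 0" using assms by (intro sin_gt_zero) auto
  moreover have "cos (2 * (x/2)) = 1 - 2 * (sin (x/2))^2" by (rule cos_double_sin)
  ultimately show False using c by simp
qed

lemma mob_Im:
  fixes q z :: complex
  assumes "norm z \<le> norm q" "z \<noteq> q"
  shows "Im (\<i> * (q + z) / (q - z)) \<ge> 0"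
proof -
  have "(Re z)^2 + (Im z)^2 \<le> (Re q)^2 + (Im q)^2"
    using assms(1) by (simp add: cmod_def)
  then have "0 \<le> (Re q + Re z) * (Re q - Re z) + (Im q + Im z) * (Im q - Im z)"
    by (simp add: algebra_simps power2_eq_square)
  moreover have "Im (\<i> * (q + z) / (q - z)) = ((Re q + Re z) * (Re q - Re z) + (Im q + Im z) * (Im q - Im z)) / ((Re q - Re z)^2 + (Im q - Im z)^2)"
    by (simp add: Im_divide power2_eq_square algebra_simps)
  ultimately show ?thesis by simp
qed

lemma mob_inj:
  fixes q :: complex assumes "q \<noteq> 0"
  shows "inj_on (\<lambda>z. \<i> * (q + z) / (q - z)) (- {q})"
proof (rule inj_onI)
  fix x y assume x: "x \<in> - {q}" and y: "y \<in> - {q}"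
    and e: "\<i> * (q + x) / (q - x) = \<i> * (q + y) / (q - y)"
  have nx: "q - x \<noteq> 0" and ny: "q - y \<noteq> 0" using x y by auto
  from e have "(q + x) * (q - y) = (q + y) * (q - x)"
    using nx ny by (simp add: field_simps)
  then have "2 * q * x = 2 * q * y" by (simp add: algebra_simps)
  then show "x = y" using assms by simp
qed

lemma mob_cont:
  fixes q :: complex
  shows "continuous_on (- {q}) (\<lambda>z. \<i> * (q + z) / (q - z))"
  by (intro continuous_intros) auto

definition c2v :: "complex \<Rightarrow> real^2" where
  "c2v w = vector [Re w, Im w]"

lemma c2v_cont: "continuous_on S c2v"
proof -
  have "c2v = (\<lambda>w. \<chi> i. if i = 1 then Re w else Im w)"
    unfolding c2v_def by (auto simp: vec_eq_iff forall_2)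
  moreover have "continuous_on S (\<lambda>w. \<chi> i::2. if i = 1 then Re w else Im w)"
  proof (intro continuous_on_vec_lambda)
    fix i :: 2
    show "continuous_on S (\<lambda>w. if i = 1 then Re w else Im w)"
      by (cases "i = 1") (auto intro!: continuous_intros)
  qed
  ultimately show ?thesis by metis
qed

lemma c2v_inj: "c2v x = c2v y \<Longrightarrow> x = y"
  unfolding c2v_def by (metis complex_eqI vector_2)

lemma disc_cross:
  fixes f g :: "real \<Rightarrow> complex" and R t1 t2 t3 t4 :: real
  assumes R: "R > 0" and t: "0 \<le> t1" "t1 < t2" "t2 < t3" "t3 < t4" "t4 < 2*pi"
    and pf: "path f" and pg: "path g"
    and f1: "pathstart f = complex_of_real R * cis t1" and f2: "pathfinish f = complex_of_real R * cis t3"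
    and g1: "pathstart g = complex_of_real R * cis t2" and g2: "pathfinish g = complex_of_real R * cis t4"
    and fi: "path_image f \<subseteq> ball 0 R \<union> {pathstart f, pathfinish f}"
    and gi: "path_image g \<subseteq> ball 0 R \<union> {pathstart g, pathfinish g}"
  shows "path_image f \<inter> path_image g \<noteq> {}"
proof
  assume disj: "path_image f \<inter> path_image g = {}"
  define \<alpha> where "\<alpha> = (t4 + t1) / 2"
  define q where "q = complex_of_real R * cis (\<alpha> + pi)"
  define \<phi> where "\<phi> t = t - \<alpha> + pi" for t
  define M where "M z = \<i> * (q + z) / (q - z)" for z
  define m where "m t = - sin (\<phi> t) / (1 - cos (\<phi> t))" for t
  have nq: "norm q = R" using R by (simp add: q_def norm_mult)
  have q0: "q \<noteq> 0" using nq R by auto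
  have key: "complex_of_real R * cis t = q * cis (\<phi> t)" for t
  proof -
    have "q * cis (\<phi> t) = complex_of_real R * cis (t + 2 * pi)"
      by (simp add: q_def \<phi>_def cis_mult algebra_simps)
    also have "cis (t + 2*pi) = cis t" by (simp add: complex_eq_iff)
    finally show ?thesis by simp
  qed
  have phr: "0 < \<phi> t" "\<phi> t < 2*pi" if "t1 \<le> t" "t \<le> t4" for t
  proof -
    have e: "\<phi> t = t - t4 / 2 - t1 / 2 + pi" by (simp add: \<phi>_def \<alpha>_def field_simps)
    show "0 < \<phi> t" unfolding e using that t by linarith
    show "\<phi> t < 2*pi" unfolding e using that t by linarith
  qed
  have Mval: "M (complex_of_real R * cis t) = complex_of_real (m t)" if "t1 \<le> t" "t \<le> t4" for t
    unfolding key M_def m_def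
    by (rule mob_real[OF q0 cos_ne_1[OF phr[OF that]]])
  have neq: "complex_of_real R * cis t \<noteq> q" if "t1 \<le> t" "t \<le> t4" for t
  proof
    assume "complex_of_real R * cis t = q"
    then have "q * cis (\<phi> t) = q * 1" using key by simp
    then have "cis (\<phi> t) = 1" using q0 by simp
    then have "cos (\<phi> t) = 1" by (simp add: complex_eq_iff)
    then show False using cos_ne_1[OF phr[OF that]] by simp
  qed
  have mmono: "m t < m t'" if "t1 \<le> t" "t < t'" "t' \<le> t4" for t t'
    unfolding m_def using that phr[of t] phr[of t']
    by (intro cot_mono) (auto simp: \<phi>_def)
  have qball: "q \<notin> ball 0 R" using nq by simp
  have sf: "path_image f \<subseteq> cball 0 R - {q}"
    using fi qball neq[of t1] neq[of t3] t f1 f2 R by (auto simp: norm_mult)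
  have sg: "path_image g \<subseteq> cball 0 R - {q}"
    using gi qball neq[of t2] neq[of t4] t g1 g2 R by (auto simp: norm_mult)
  have Mc: "continuous_on (cball 0 R - {q}) M"
    unfolding M_def by (rule continuous_on_subset[OF mob_cont]) auto
  have Mi: "inj_on M (cball 0 R - {q})"
    unfolding M_def by (rule inj_on_subset[OF mob_inj[OF q0]]) auto
  have MIm: "Im (M z) \<ge> 0" if "z \<in> cball 0 R - {q}" for z
    unfolding M_def using that nq by (intro mob_Im) auto
  define F where "F = c2v \<circ> M \<circ> f"
  define G where "G = c2v \<circ> M \<circ> g"
  have pF: "path F"
    unfolding F_def path_def
    by (intro continuous_on_compose c2v_cont continuous_on_subset[OF Mc])
       (use pf sf in \<open>auto simp: path_def path_image_def\<close>)
  have pG: "path G"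
    unfolding G_def path_def
    by (intro continuous_on_compose c2v_cont continuous_on_subset[OF Mc])
       (use pg sg in \<open>auto simp: path_def path_image_def\<close>)
  have "compact (M ` (path_image f \<union> path_image g))"
    by (intro compact_continuous_image continuous_on_subset[OF Mc] compact_Un compact_path_image pf pg)
       (use sf sg in auto)
  then obtain B where B: "\<And>w. w \<in> M ` (path_image f \<union> path_image g) \<Longrightarrow> norm w \<le> B"
    using compact_imp_bounded bounded_iff by metis
  define a :: "real^2" where "a = vector [-B, 0]"
  define b :: "real^2" where "b = vector [B, B]"
  have inbox: "c2v (M z) \<in> cbox a b" if "z \<in> path_image f \<union> path_image g" for z
  proof -
    have n: "norm (M z) \<le> B" using B that by auto
    have zz: "z \<in> cball 0 R - {q}" using that sf sg by blast
    have i: "Im (M z) \<ge> 0" by (rule MIm[OF zz])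
    show ?thesis
      using n i abs_Re_le_cmod[of "M z"] abs_Im_le_cmod[of "M z"]
      by (auto simp: mem_box_cart forall_2 a_def b_def c2v_def)
  qed
  have iF: "path_image F = c2v ` M ` path_image f"
    unfolding F_def by (simp add: path_image_compose image_comp)
  have iG: "path_image G = c2v ` M ` path_image g"
    unfolding G_def by (simp add: path_image_compose image_comp)
  have sF: "path_image F \<subseteq> cbox a b" using inbox iF by auto
  have sG: "path_image G \<subseteq> cbox a b" using inbox iG by auto
  have ends: "pathstart F = c2v (complex_of_real (m t1))" "pathfinish F = c2v (complex_of_real (m t3))"
     "pathstart G = c2v (complex_of_real (m t2))" "pathfinish G = c2v (complex_of_real (m t4))"
    unfolding F_def G_def pathstart_compose pathfinish_compose
    using f1 f2 g1 g2 Mval t by (auto simp: pathstart_def pathfinish_def)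
  obtain z where z1: "z \<in> path_image F" and z2: "z \<in> path_image G"
  proof (rule fashoda_interlace[OF pF pG sF sG])
    show "pathstart F $ 2 = a $ 2" "pathfinish F $ 2 = a $ 2"
      "pathstart G $ 2 = a $ 2" "pathfinish G $ 2 = a $ 2"
      unfolding ends by (auto simp: a_def c2v_def)
    show "pathstart F $ 1 < pathstart G $ 1" "pathstart G $ 1 < pathfinish F $ 1"
      "pathfinish F $ 1 < pathfinish G $ 1"
      unfolding ends using mmono t by (auto simp: c2v_def)
  qed
  then obtain x y where x: "x \<in> path_image f" and y: "y \<in> path_image g" and cc: "c2v (M x) = c2v (M y)"
    using iF iG by auto
  from cc have "M x = M y" by (rule c2v_inj)
  then have "x = y" using Mi x y sf sg by (auto dest: inj_onD)
  then show False using disj x y by auto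
qed



lemma edge_rel_iff: "(a, b) \<in> edge_rel F \<longleftrightarrow> {a, b} \<in> F"
  by (simp add: edge_rel_def)

lemma edge_rel_sym: "(a, b) \<in> edge_rel F \<Longrightarrow> (b, a) \<in> edge_rel F"
  by (simp add: edge_rel_def insert_commute)

lemma reach_sym: "(a, b) \<in> (edge_rel F)\<^sup>* \<Longrightarrow> (b, a) \<in> (edge_rel F)\<^sup>*"
  by (induction rule: rtrancl_induct)
     (auto intro: converse_rtrancl_into_rtrancl edge_rel_sym)

lemma edge_rel_mono: "F \<subseteq> F' \<Longrightarrow> edge_rel F \<subseteq> edge_rel F'"
  by (auto simp: edge_rel_def)

lemma reach_mono: "F \<subseteq> F' \<Longrightarrow> (edge_rel F)\<^sup>* \<subseteq> (edge_rel F')\<^sup>*"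
  by (intro rtrancl_mono edge_rel_mono)

lemma reach_monoD: "(a, b) \<in> (edge_rel F)\<^sup>* \<Longrightarrow> F \<subseteq> F' \<Longrightarrow> (a, b) \<in> (edge_rel F')\<^sup>*"
  using reach_mono by blast

lemma edge_step: "(a, b) \<in> (edge_rel F)\<^sup>* \<Longrightarrow> {b, c} \<in> F \<Longrightarrow> (a, c) \<in> (edge_rel F)\<^sup>*"
  by (auto intro: rtrancl_into_rtrancl simp: edge_rel_def)

lemma in_component: "w \<in> component F u \<longleftrightarrow> (u, w) \<in> (edge_rel F)\<^sup>*"
  by (simp add: component_def)

lemma dead_end:
  assumes e: "e = {v, y}" and yv: "y \<noteq> v" and only: "\<forall>g\<in>F. v \<in> g \<longrightarrow> g = e"
    and r: "(u, w) \<in> (edge_rel F)\<^sup>*" and uv: "u \<noteq> v"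
  shows "(w \<noteq> v \<longrightarrow> (u, w) \<in> (edge_rel (F - {e}))\<^sup>*) \<and> (w = v \<longrightarrow> (u, y) \<in> (edge_rel (F - {e}))\<^sup>*)"
  using r
proof (induction rule: rtrancl_induct)
  case base
  then show ?case using uv by simp
next
  case (step w1 w2)
  have g: "{w1, w2} \<in> F" using step.hyps(2) by (simp add: edge_rel_def)
  show ?case
  proof (cases "w1 = v")
    case True
    show ?thesis
    proof (cases "w2 = v")
      case True
      then show ?thesis using step.IH \<open>w1 = v\<close> by simp
    next
      case False
      have "{w1, w2} = e" using only g \<open>w1 = v\<close> by auto
      then have "w2 = y" using e False \<open>w1 = v\<close> by (auto simp: doubleton_eq_iff)
      then show ?thesis using step.IH \<open>w1 = v\<close> False by simp
    qed
  next
    case False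
    show ?thesis
    proof (cases "w2 = v")
      case True
      have "{w1, w2} = e" using only g True by auto
      then have "w1 = y" using e False True by (auto simp: doubleton_eq_iff)
      then show ?thesis using step.IH False True by simp
    next
      case False2: False
      have "{w1, w2} \<noteq> e" using e False False2 by auto
      then have "{w1, w2} \<in> F - {e}" using g by simp
      then show ?thesis using step.IH False False2 by (auto intro: edge_step)
    qed
  qed
qed

definition inv_graph :: "'v set \<Rightarrow> 'v set set \<Rightarrow> bool" where
  "inv_graph W F \<longleftrightarrow> finite W \<and> (\<forall>g\<in>F. g \<subseteq> W \<and> card g = 2) \<and>
     (\<forall>g\<in>F. \<forall>x y. g = {x, y} \<longrightarrow> (x, y) \<notin> (edge_rel (F - {g}))\<^sup>*)"

lemma split_eq:
  assumes "X \<inter> C = X \<inter> C'"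
  shows "{X \<inter> C, X - C} = {X \<inter> C', X - C'}"
proof -
  have "X - C = X - (X \<inter> C)" "X - C' = X - (X \<inter> C')" by auto
  then show ?thesis using assms by simp
qed

lemma card2_obtain:
  assumes "card g = 2" "v \<in> g"
  obtains y where "g = {v, y}" "y \<noteq> v"
proof -
  obtain a b where g: "g = {a, b}" "a \<noteq> b" using assms(1) card_2_iff by metis
  show ?thesis
  proof (cases "v = a")
    case True
    then show ?thesis using that g by auto
  next
    case False
    then have "v = b" using assms(2) g by auto
    then show ?thesis using that g by auto
  qed
qed

lemma prune_ok:
  assumes inv: "inv_graph W F" and v: "v \<in> W" "v \<notin> X" and inc: "{f \<in> F. v \<in> f} = {e}"
  shows "inv_graph (W - {v}) (F - {e}) \<and> tree_splits X (W - {v}, F - {e}) \<subseteq> tree_splits X (W, F)"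
proof -
  have eF: "e \<in> F" "v \<in> e" using inc by auto
  then have "card e = 2" using inv by (auto simp: inv_graph_def)
  then obtain y where e: "e = {v, y}" "y \<noteq> v" using card2_obtain eF(2) by metis
  have only: "\<And>g. g \<in> F \<Longrightarrow> v \<in> g \<Longrightarrow> g = e" using inc by auto
  have i1: "inv_graph (W - {v}) (F - {e})"
    unfolding inv_graph_def
  proof (intro conjI ballI allI impI)
    show "finite (W - {v})" using inv by (simp add: inv_graph_def)
  next
    fix g assume g: "g \<in> F - {e}"
    then have "v \<notin> g" using only by auto
    then show "g \<subseteq> W - {v}" using g inv by (auto simp: inv_graph_def)
    show "card g = 2" using g inv by (auto simp: inv_graph_def)
  next
    fix g x y' assume g: "g \<in> F - {e}" and gx: "g = {x, y'}"
    show "(x, y') \<notin> (edge_rel (F - {e} - {g}))\<^sup>*"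
    proof
      assume "(x, y') \<in> (edge_rel (F - {e} - {g}))\<^sup>*"
      then have "(x, y') \<in> (edge_rel (F - {g}))\<^sup>*" by (rule reach_monoD) auto
      then show False using inv g gx by (auto simp: inv_graph_def)
    qed
  qed
  have i2: "tree_splits X (W - {v}, F - {e}) \<subseteq> tree_splits X (W, F)"
  proof
    fix s assume "s \<in> tree_splits X (W - {v}, F - {e})"
    then obtain f u where s: "s = {X \<inter> component (F - {e} - {f}) u, X - component (F - {e} - {f}) u}"
      and f: "f \<in> F - {e}" and u: "u \<in> f"
      by (auto simp: tree_splits_def)
    have uv: "u \<noteq> v" using f u only by auto
    have "X \<inter> component (F - {e} - {f}) u = X \<inter> component (F - {f}) u"
    proof
      show "X \<inter> component (F - {e} - {f}) u \<subseteq> X \<inter> component (F - {f}) u"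
        by (auto simp: in_component intro: reach_monoD)
    next
      show "X \<inter> component (F - {f}) u \<subseteq> X \<inter> component (F - {e} - {f}) u"
      proof
        fix w assume w: "w \<in> X \<inter> component (F - {f}) u"
        then have wv: "w \<noteq> v" using v by auto
        have "(u, w) \<in> (edge_rel (F - {f}))\<^sup>*" using w by (simp add: in_component)
        from dead_end[OF e(1) e(2) _ this uv] only wv
        have "(u, w) \<in> (edge_rel (F - {f} - {e}))\<^sup>*" by auto
        moreover have "F - {f} - {e} = F - {e} - {f}" by auto
        ultimately show "w \<in> X \<inter> component (F - {e} - {f}) u" using w by (simp add: in_component)
      qed
    qed
    then have "s = {X \<inter> component (F - {f}) u, X - component (F - {f}) u}"
      using s split_eq by metis
    then show "s \<in> tree_splits X (W, F)" using f u by (auto simp: tree_splits_def)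
  qed
  show ?thesis using i1 i2 by simp
qed

lemma suppress_ok:
  assumes inv: "inv_graph W F" and v: "v \<in> W" "v \<notin> X"
    and ab: "a \<noteq> b" "a \<noteq> v" "b \<noteq> v"
    and inc: "{f \<in> F. v \<in> f} = {{a, v}, {v, b}}"
  shows "inv_graph (W - {v}) ((F - {{a, v}, {v, b}}) \<union> {{a, b}}) \<and>
         tree_splits X (W - {v}, (F - {{a, v}, {v, b}}) \<union> {{a, b}}) \<subseteq> tree_splits X (W, F)"
proof -
  define F' where "F' = (F - {{a, v}, {v, b}}) \<union> {{a, b}}"
  have av: "{a, v} \<in> F" and vb: "{v, b} \<in> F" using inc by auto
  have only: "\<And>g. g \<in> F \<Longrightarrow> v \<in> g \<Longrightarrow> g = {a, v} \<or> g = {v, b}" using inc by auto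
  have ne1: "{v, b} \<noteq> {a, v}" using ab by (auto simp: doubleton_eq_iff)
  have abF: "{a, b} \<notin> F"
  proof
    assume abin: "{a, b} \<in> F"
    have "{a, b} \<noteq> {a, v}" using ab by (auto simp: doubleton_eq_iff)
    then have "(a, b) \<in> (edge_rel (F - {{a, v}}))\<^sup>*"
      using abin by (auto simp: edge_rel_def)
    moreover have "{b, v} \<in> F - {{a, v}}" using vb ne1 by (auto simp: insert_commute)
    ultimately have "(a, v) \<in> (edge_rel (F - {{a, v}}))\<^sup>*" by (rule edge_step)
    then show False using inv av by (auto simp: inv_graph_def)
  qed
  have sub1: "(edge_rel (F' - {f}))\<^sup>* \<subseteq> (edge_rel (F - {f}))\<^sup>*"
    if "f \<noteq> {a, v}" "f \<noteq> {v, b}" for f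
  proof (rule rtrancl_subset_rtrancl, rule subsetI)
    fix p assume p: "p \<in> edge_rel (F' - {f})"
    obtain x y where pxy: "p = (x, y)" by (cases p)
    show "p \<in> (edge_rel (F - {f}))\<^sup>*"
    proof (cases "{x, y} = {a, b}")
      case True
      have a1: "(a, v) \<in> edge_rel (F - {f})" using av that by (auto simp: edge_rel_def)
      have a2: "(v, b) \<in> edge_rel (F - {f})" using vb that by (auto simp: edge_rel_def)
      have "(a, b) \<in> (edge_rel (F - {f}))\<^sup>*" using a1 a2 by auto
      then have "(b, a) \<in> (edge_rel (F - {f}))\<^sup>*" by (rule reach_sym)
      then show ?thesis using True \<open>(a, b) \<in> _\<close> pxy by (auto simp: doubleton_eq_iff)
    next
      case False
      then have "{x, y} \<in> F - {f}" using p pxy by (auto simp: edge_rel_def F'_def)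
      then show ?thesis using pxy by (auto simp: edge_rel_def)
    qed
  qed
  have sub2: "(w \<noteq> v \<longrightarrow> (u, w) \<in> (edge_rel (F' - {f}))\<^sup>*) \<and>
      (w = v \<longrightarrow> (u, a) \<in> (edge_rel (F' - {f}))\<^sup>* \<and> (u, b) \<in> (edge_rel (F' - {f}))\<^sup>*)"
    if fab: "f \<noteq> {a, b}" and r: "(u, w) \<in> (edge_rel (F - {f}))\<^sup>*" and uv: "u \<noteq> v" for f u w
    using r
  proof (induction rule: rtrancl_induct)
    case base
    then show ?case using uv by simp
  next
    case (step w1 w2)
    have g: "{w1, w2} \<in> F - {f}" using step.hyps(2) by (simp add: edge_rel_def)
    have abF': "{a, b} \<in> F' - {f}" using fab by (simp add: F'_def)
    have ab1: "(a, b) \<in> edge_rel (F' - {f})" "(b, a) \<in> edge_rel (F' - {f})"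
      using abF' by (auto simp: edge_rel_def insert_commute)
    show ?case
    proof (cases "w1 = v")
      case True
      show ?thesis
      proof (cases "w2 = v")
        case True
        then show ?thesis using step.IH \<open>w1 = v\<close> by simp
      next
        case False
        have "{w1, w2} = {a, v} \<or> {w1, w2} = {v, b}" using only g \<open>w1 = v\<close> by auto
        then have "w2 = a \<or> w2 = b" using False \<open>w1 = v\<close> by (auto simp: doubleton_eq_iff)
        then show ?thesis using step.IH \<open>w1 = v\<close> False by auto
      qed
    next
      case False
      show ?thesis
      proof (cases "w2 = v")
        case True
        have "{w1, w2} = {a, v} \<or> {w1, w2} = {v, b}" using only g True by auto
        then have w1: "w1 = a \<or> w1 = b" using False True by (auto simp: doubleton_eq_iff)
        have "(u, w1) \<in> (edge_rel (F' - {f}))\<^sup>*" using step.IH False by simp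
        then have "(u, a) \<in> (edge_rel (F' - {f}))\<^sup>* \<and> (u, b) \<in> (edge_rel (F' - {f}))\<^sup>*"
          using w1 ab1 by (auto intro: rtrancl_into_rtrancl)
        then show ?thesis using True by simp
      next
        case False2: False
        have n1: "{w1, w2} \<noteq> {a, v}" "{w1, w2} \<noteq> {v, b}" using False False2 by (auto simp: doubleton_eq_iff)
        have "{w1, w2} \<in> F' - {f}" using g n1 by (auto simp: F'_def)
        then show ?thesis using step.IH False False2 by (auto intro: edge_step)
      qed
    qed
  qed
  have i1: "inv_graph (W - {v}) F'"
    unfolding inv_graph_def
  proof (intro conjI ballI allI impI)
    show "finite (W - {v})" using inv by (simp add: inv_graph_def)
  next
    fix g assume g: "g \<in> F'"
    show "g \<subseteq> W - {v}"
    proof (cases "g = {a, b}")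
      case True
      have "a \<in> W" "b \<in> W" using av vb inv by (auto simp: inv_graph_def)
      then show ?thesis using True ab by auto
    next
      case False
      then have "g \<in> F" "v \<notin> g" using g only by (auto simp: F'_def)
      then show ?thesis using inv by (auto simp: inv_graph_def)
    qed
    show "card g = 2" using g inv ab by (auto simp: inv_graph_def F'_def)
  next
    fix g x y assume g: "g \<in> F'" and gx: "g = {x, y}"
    show "(x, y) \<notin> (edge_rel (F' - {g}))\<^sup>*"
    proof
      assume xy: "(x, y) \<in> (edge_rel (F' - {g}))\<^sup>*"
      show False
      proof (cases "g = {a, b}")
        case True
        have eq: "F' - {g} = F - {{a, v}, {v, b}}" using True abF by (auto simp: F'_def)
        have "(x, y) \<in> (edge_rel (F - {{a, v}}))\<^sup>*"
          using xy unfolding eq by (rule reach_monoD) auto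
        moreover have "(y, x) \<in> (edge_rel (F - {{a, v}}))\<^sup>*" using calculation by (rule reach_sym)
        ultimately have "(a, b) \<in> (edge_rel (F - {{a, v}}))\<^sup>*"
          using True gx by (auto simp: doubleton_eq_iff)
        moreover have "{b, v} \<in> F - {{a, v}}" using vb ne1 by (auto simp: insert_commute)
        ultimately have "(a, v) \<in> (edge_rel (F - {{a, v}}))\<^sup>*" by (rule edge_step)
        then show False using inv av by (auto simp: inv_graph_def)
      next
        case False
        then have gF: "g \<in> F" "g \<noteq> {a, v}" "g \<noteq> {v, b}" using g by (auto simp: F'_def)
        then have "(x, y) \<in> (edge_rel (F - {g}))\<^sup>*" using sub1 xy by blast
        then show False using inv gF gx by (auto simp: inv_graph_def)
      qed
    qed
  qed
  have i2: "tree_splits X (W - {v}, F') \<subseteq> tree_splits X (W, F)"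
  proof
    fix s assume "s \<in> tree_splits X (W - {v}, F')"
    then obtain f u where s: "s = {X \<inter> component (F' - {f}) u, X - component (F' - {f}) u}"
      and f: "f \<in> F'" and u: "u \<in> f"
      by (auto simp: tree_splits_def)
    show "s \<in> tree_splits X (W, F)"
    proof (cases "f = {a, b}")
      case True
      have eq: "F' - {f} = F - {{a, v}, {v, b}}" using True abF by (auto simp: F'_def)
      show ?thesis
      proof (cases "u = a")
        case True
        have "X \<inter> component (F' - {f}) u = X \<inter> component (F - {{a, v}}) u"
        proof
          show "X \<inter> component (F' - {f}) u \<subseteq> X \<inter> component (F - {{a, v}}) u"
            unfolding eq by (auto simp: in_component intro: reach_monoD)
        next
          show "X \<inter> component (F - {{a, v}}) u \<subseteq> X \<inter> component (F' - {f}) u"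
          proof
            fix w assume w: "w \<in> X \<inter> component (F - {{a, v}}) u"
            then have wv: "w \<noteq> v" using v by auto
            have r: "(u, w) \<in> (edge_rel (F - {{a, v}}))\<^sup>*" using w by (simp add: in_component)
            have o: "\<forall>g\<in>F - {{a, v}}. v \<in> g \<longrightarrow> g = {v, b}" using only by auto
            from dead_end[OF refl ab(3) o r] wv True ab
            have "(u, w) \<in> (edge_rel (F - {{a, v}} - {{v, b}}))\<^sup>*" by auto
            moreover have "F - {{a, v}} - {{v, b}} = F' - {f}" using eq by auto
            ultimately show "w \<in> X \<inter> component (F' - {f}) u" using w by (simp add: in_component)
          qed
        qed
        then have "s = {X \<inter> component (F - {{a, v}}) u, X - component (F - {{a, v}}) u}"
          using s split_eq by metis
        then show ?thesis using av True by (auto simp: tree_splits_def)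
      next
        case False
        then have ub: "u = b" using u \<open>f = {a, b}\<close> by auto
        have "X \<inter> component (F' - {f}) u = X \<inter> component (F - {{v, b}}) u"
        proof
          show "X \<inter> component (F' - {f}) u \<subseteq> X \<inter> component (F - {{v, b}}) u"
            unfolding eq by (auto simp: in_component intro: reach_monoD)
        next
          show "X \<inter> component (F - {{v, b}}) u \<subseteq> X \<inter> component (F' - {f}) u"
          proof
            fix w assume w: "w \<in> X \<inter> component (F - {{v, b}}) u"
            then have wv: "w \<noteq> v" using v by auto
            have r: "(u, w) \<in> (edge_rel (F - {{v, b}}))\<^sup>*" using w by (simp add: in_component)
            have o: "\<forall>g\<in>F - {{v, b}}. v \<in> g \<longrightarrow> g = {v, a}" using only by (auto simp: insert_commute)
            from dead_end[OF refl ab(2) o r] wv ub ab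
            have "(u, w) \<in> (edge_rel (F - {{v, b}} - {{v, a}}))\<^sup>*" by auto
            moreover have "F - {{v, b}} - {{v, a}} = F' - {f}" using eq by (auto simp: insert_commute)
            ultimately show "w \<in> X \<inter> component (F' - {f}) u" using w by (simp add: in_component)
          qed
        qed
        then have "s = {X \<inter> component (F - {{v, b}}) u, X - component (F - {{v, b}}) u}"
          using s split_eq by metis
        then show ?thesis using vb ub by (auto simp: tree_splits_def)
      qed
    next
      case False
      then have fF: "f \<in> F" "f \<noteq> {a, v}" "f \<noteq> {v, b}" using f by (auto simp: F'_def)
      have uv: "u \<noteq> v" using fF u only by auto
      have "X \<inter> component (F' - {f}) u = X \<inter> component (F - {f}) u"
      proof
        show "X \<inter> component (F' - {f}) u \<subseteq> X \<inter> component (F - {f}) u"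
          using sub1[OF fF(2,3)] by (auto simp: in_component)
      next
        show "X \<inter> component (F - {f}) u \<subseteq> X \<inter> component (F' - {f}) u"
        proof
          fix w assume w: "w \<in> X \<inter> component (F - {f}) u"
          then have wv: "w \<noteq> v" using v by auto
          have r: "(u, w) \<in> (edge_rel (F - {f}))\<^sup>*" using w by (simp add: in_component)
          from sub2[OF False r uv] wv
          show "w \<in> X \<inter> component (F' - {f}) u" using w by (simp add: in_component)
        qed
      qed
      then have "s = {X \<inter> component (F - {f}) u, X - component (F - {f}) u}"
        using s split_eq by metis
      then show ?thesis using fF u by (auto simp: tree_splits_def)
    qed
  qed
  show ?thesis using i1 i2 by (simp add: F'_def)
qed

lemma reduce_ok:
  assumes "(reduce_step X)\<^sup>*\<^sup>* G0 T" "inv_graph (fst G0) (snd G0)"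
  shows "inv_graph (fst T) (snd T) \<and> tree_splits X T \<subseteq> tree_splits X G0"
  using assms(1)
proof (induction rule: rtranclp_induct)
  case base
  then show ?case using assms(2) by simp
next
  case (step G G')
  obtain W F where G: "G = (W, F)" by (cases G)
  from step.hyps(2) consider (p) "prune_step X G G'" | (s) "suppress_step X G G'"
    by (auto simp: reduce_step_def)
  then show ?case
  proof cases
    case p
    then obtain v e where "v \<in> W" "v \<notin> X" "{f \<in> F. v \<in> f} = {e}" "G' = (W - {v}, F - {e})"
      by (auto simp: prune_step_def G)
    with prune_ok[of W F v X e] step.IH G show ?thesis by auto
  next
    case s
    then obtain v a b where "v \<in> W" "v \<notin> X" "a \<noteq> b" "a \<noteq> v" "b \<noteq> v"
      "{f \<in> F. v \<in> f} = {{a, v}, {v, b}}" "G' = (W - {v}, (F - {{a, v}, {v, b}}) \<union> {{a, b}})"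
      by (auto simp: suppress_step_def G)
    with suppress_ok[of W F v X a b] step.IH G show ?thesis by auto
  qed
qed



lemma avoid:
  assumes "(z, w) \<in> (edge_rel F1)\<^sup>*" "\<forall>w'. (z, w') \<in> (edge_rel F1)\<^sup>* \<longrightarrow> w' \<noteq> x" "x \<in> f"
  shows "(z, w) \<in> (edge_rel (F1 - {f}))\<^sup>*"
  using assms(1)
proof (induction rule: rtrancl_induct)
  case base
  then show ?case by simp
next
  case (step w1 w2)
  have "(z, w2) \<in> (edge_rel F1)\<^sup>*" using step.hyps by auto
  then have "w1 \<noteq> x" "w2 \<noteq> x" using step.hyps(1) assms(2) by auto
  then have "{w1, w2} \<noteq> f" using assms(3) by auto
  then have "{w1, w2} \<in> F1 - {f}" using step.hyps(2) by (simp add: edge_rel_def)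
  then show ?case by (rule edge_step[OF step.IH])
qed

lemma reach_in_W:
  assumes "(x, w) \<in> (edge_rel F)\<^sup>*" "\<forall>g\<in>F. g \<subseteq> W"
  shows "w \<in> insert x W"
  using assms(1)
proof (induction rule: rtrancl_induct)
  case base then show ?case by simp
next
  case (step w1 w2)
  then show ?case using assms(2) by (auto simp: edge_rel_def)
qed

lemma component_finite:
  assumes "inv_graph W F" "F' \<subseteq> F"
  shows "finite (component F' x)"
proof -
  have "component F' x \<subseteq> insert x W"
  proof
    fix w assume "w \<in> component F' x"
    then have "(x, w) \<in> (edge_rel F')\<^sup>*" by (simp add: in_component)
    moreover have "\<forall>g\<in>F'. g \<subseteq> W" using assms by (auto simp: inv_graph_def)
    ultimately show "w \<in> insert x W" by (rule reach_in_W)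
  qed
  moreover have "finite W" using assms by (simp add: inv_graph_def)
  ultimately show ?thesis by (meson finite_insert finite_subset)
qed

lemma nontriv_aux:
  assumes inv: "inv_graph W F" and irr: "\<not> (\<exists>T'. reduce_step X (W, F) T')"
  shows "card (component (F - {f}) x) = n \<Longrightarrow> f \<in> F \<Longrightarrow> x \<in> f \<Longrightarrow> X \<inter> component (F - {f}) x \<noteq> {}"
proof (induction n arbitrary: f x rule: less_induct)
  case (less n)
  show ?case
  proof (cases "x \<in> X")
    case True
    then show ?thesis by (auto simp: in_component)
  next
    case False
    have xW: "x \<in> W" using less.prems inv by (auto simp: inv_graph_def)
    have "\<not> prune_step X (W, F) (W - {x}, F - {f})" using irr by (auto simp: reduce_step_def)
    moreover have "{g \<in> F. x \<in> g} = {f} \<Longrightarrow> prune_step X (W, F) (W - {x}, F - {f})"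
      unfolding prune_step_def using xW False by auto
    ultimately have "{g \<in> F. x \<in> g} \<noteq> {f}" by blast
    then obtain g where g: "g \<in> F" "x \<in> g" "g \<noteq> f" using less.prems by auto
    then have "card g = 2" using inv by (auto simp: inv_graph_def)
    then obtain z where gz: "g = {x, z}" "z \<noteq> x" using card2_obtain g(2) by metis
    have nb: "(x, z) \<notin> (edge_rel (F - {g}))\<^sup>*" using inv g gz by (auto simp: inv_graph_def)
    have nb': "\<forall>w'. (z, w') \<in> (edge_rel (F - {g}))\<^sup>* \<longrightarrow> w' \<noteq> x"
    proof (intro allI impI notI)
      fix w' assume "(z, w') \<in> (edge_rel (F - {g}))\<^sup>*" "w' = x"
      then have "(x, z) \<in> (edge_rel (F - {g}))\<^sup>*" using reach_sym by simp
      then show False using nb by simp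
    qed
    have xz: "(x, z) \<in> edge_rel (F - {f})" using g gz by (auto simp: edge_rel_def)
    have sub: "component (F - {g}) z \<subseteq> component (F - {f}) x"
    proof
      fix w assume "w \<in> component (F - {g}) z"
      then have "(z, w) \<in> (edge_rel (F - {g}))\<^sup>*" by (simp add: in_component)
      then have "(z, w) \<in> (edge_rel (F - {g} - {f}))\<^sup>*" by (rule avoid[OF _ nb' less.prems(3)])
      then have "(z, w) \<in> (edge_rel (F - {f}))\<^sup>*" by (rule reach_monoD) auto
      then show "w \<in> component (F - {f}) x" using xz by (auto simp: in_component intro: converse_rtrancl_into_rtrancl)
    qed
    have "x \<in> component (F - {f}) x" by (simp add: in_component)
    moreover have "x \<notin> component (F - {g}) z" using nb' by (auto simp: in_component)
    ultimately have ps: "component (F - {g}) z \<subset> component (F - {f}) x" using sub by blast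
    have "finite (component (F - {f}) x)" by (rule component_finite[OF inv]) auto
    then have "card (component (F - {g}) z) < n" using psubset_card_mono[OF _ ps] less.prems by simp
    from less.IH[OF this refl g(1)] gz
    have "X \<inter> component (F - {g}) z \<noteq> {}" by simp
    then show ?thesis using sub by blast
  qed
qed

lemma nontriv:
  assumes inv: "inv_graph W F" and irr: "\<not> (\<exists>T'. reduce_step X (W, F) T')"
    and f: "f \<in> F" "x \<in> f"
  shows "X \<inter> component (F - {f}) x \<noteq> {}" "X - component (F - {f}) x \<noteq> {}"
proof -
  show a: "X \<inter> component (F - {f}) x \<noteq> {}" using nontriv_aux[OF inv irr refl f] .
  have "card f = 2" using inv f by (auto simp: inv_graph_def)
  then obtain y where fy: "f = {x, y}" "y \<noteq> x" using card2_obtain f(2) by metis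
  have b: "X \<inter> component (F - {f}) y \<noteq> {}" using nontriv_aux[OF inv irr refl f(1)] fy by simp
  have nb: "(x, y) \<notin> (edge_rel (F - {f}))\<^sup>*" using inv f fy by (auto simp: inv_graph_def)
  have "component (F - {f}) y \<inter> component (F - {f}) x = {}"
  proof (rule ccontr)
    assume "component (F - {f}) y \<inter> component (F - {f}) x \<noteq> {}"
    then obtain w where "(y, w) \<in> (edge_rel (F - {f}))\<^sup>*" "(x, w) \<in> (edge_rel (F - {f}))\<^sup>*"
      by (auto simp: in_component)
    then have "(x, y) \<in> (edge_rel (F - {f}))\<^sup>*" using reach_sym[of y w] rtrancl_trans[of x w _ y] by simp
    then show False using nb by simp
  qed
  then show "X - component (F - {f}) x \<noteq> {}" using b by blast
qed



lemma rn_facts: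
  assumes "rooted_network V A r X"
  shows "finite V" "A \<subseteq> V \<times> V" "\<And>v. (v, v) \<notin> A\<^sup>+" "r \<in> V" "indeg A r = 0"
    "X = {v \<in> V. indeg A v = 1 \<and> outdeg A v = 0}"
    "\<And>v. v \<in> V - {r} \<Longrightarrow> (indeg A v, outdeg A v) \<in> {(1, 0), (1, 2), (2, 1)}"
  using assms unfolding rooted_network_def by auto

lemma parents_finite:
  assumes "rooted_network V A r X"
  shows "finite {u. (u, y) \<in> A}"
proof -
  have "{u. (u, y) \<in> A} \<subseteq> V" using rn_facts(2)[OF assms] by auto
  then show ?thesis using rn_facts(1)[OF assms] finite_subset by blast
qed

lemma unique_parent:
  assumes rn: "rooted_network V A r X" and dc: "deletion_choice A D"
    and x1: "(x1, y) \<in> A - D" and x2: "(x2, y) \<in> A - D"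
  shows "x1 = x2"
proof (rule ccontr)
  assume ne: "x1 \<noteq> x2"
  define P where "P = {u. (u, y) \<in> A}"
  have fP: "finite P" using parents_finite[OF rn] by (simp add: P_def)
  have sub: "{x1, x2} \<subseteq> P" using x1 x2 by (auto simp: P_def)
  have "card {x1, x2} \<le> card P" using card_mono[OF fP sub] .
  then have c2: "2 \<le> indeg A y" using ne by (simp add: indeg_def P_def)
  have yV: "y \<in> V" using x1 rn_facts(2)[OF rn] by auto
  have yr: "y \<noteq> r" using c2 rn_facts(5)[OF rn] by auto
  have "indeg A y = 2" using c2 rn_facts(7)[OF rn, of y] yV yr by auto
  then have cP: "card P = 2" by (simp add: indeg_def P_def)
  have PE: "P = {x1, x2}"
    using card_subset_eq[OF fP sub] cP ne by simp
  have "card {u. (u, y) \<in> D} = 1" using dc \<open>indeg A y = 2\<close> by (auto simp: deletion_choice_def)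
  then obtain d where d: "{u. (u, y) \<in> D} = {d}" using card_1_singletonE by blast
  have "(d, y) \<in> D" using d by auto
  then have "d \<in> P" using dc by (auto simp: deletion_choice_def hybrid_edges_def P_def)
  then show False using PE x1 x2 \<open>(d, y) \<in> D\<close> by auto
qed

lemma parent_exists:
  assumes rn: "rooted_network V A r X" and dc: "deletion_choice A D"
    and y: "y \<in> V" "y \<noteq> r"
  shows "\<exists>p. (p, y) \<in> A - D"
proof -
  define P where "P = {u. (u, y) \<in> A}"
  have fP: "finite P" using parents_finite[OF rn] by (simp add: P_def)
  have deg: "indeg A y = 1 \<or> indeg A y = 2" using rn_facts(7)[OF rn, of y] y by auto
  then show ?thesis
  proof
    assume i1: "indeg A y = 1"
    then have "card P = 1" by (simp add: indeg_def P_def)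
    then obtain p where "P = {p}" using card_1_singletonE by blast
    then have pA: "(p, y) \<in> A" by (auto simp: P_def)
    have "(p, y) \<notin> D" using dc i1 by (auto simp: deletion_choice_def hybrid_edges_def)
    then show ?thesis using pA by auto
  next
    assume i2: "indeg A y = 2"
    then have cP: "card P = 2" by (simp add: indeg_def P_def)
    have "card {u. (u, y) \<in> D} = 1" using dc i2 by (auto simp: deletion_choice_def)
    then obtain d where d: "{u. (u, y) \<in> D} = {d}" using card_1_singletonE by blast
    have "P \<noteq> {d}" using cP by auto
    moreover have "P \<noteq> {}" using cP by auto
    ultimately obtain p where p: "p \<in> P" "p \<noteq> d" by blast
    then have "(p, y) \<notin> D" using d by auto
    then show ?thesis using p by (auto simp: P_def)
  qed
qed

lemma reach_root:
  assumes rn: "rooted_network V A r X" and dc: "deletion_choice A D" and y: "y \<in> V"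
  shows "(r, y) \<in> (A - D)\<^sup>*"
proof -
  have fA: "finite A" using rn_facts(1,2)[OF rn] finite_subset by (metis finite_cartesian_product)
  have "acyclic A" using rn_facts(3)[OF rn] by (simp add: acyclic_def)
  then have wf: "wf A" using fA finite_acyclic_wf by blast
  show ?thesis using y
  proof (induction y rule: wf_induct_rule[OF wf])
    case (1 y)
    show ?case
    proof (cases "y = r")
      case True then show ?thesis by simp
    next
      case False
      then obtain p where p: "(p, y) \<in> A - D" using parent_exists[OF rn dc "1.prems"] by blast
      then have "p \<in> V" using rn_facts(2)[OF rn] by auto
      then have "(r, p) \<in> (A - D)\<^sup>*" using 1 p by blast
      then show ?thesis using p by (rule rtrancl_into_rtrancl)
    qed
  qed
qed

lemma T0_inv:
  assumes rn: "rooted_network V A r X" and dc: "deletion_choice A D"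
  shows "inv_graph V (und_edges (A - D))"
  unfolding inv_graph_def
proof (intro conjI ballI allI impI)
  show "finite V" using rn_facts(1)[OF rn] .
next
  fix g assume "g \<in> und_edges (A - D)"
  then obtain p c where g: "g = {p, c}" "(p, c) \<in> A - D" by (auto simp: und_edges_def)
  then have "p \<noteq> c" using rn_facts(3)[OF rn, of p] by auto
  then show "card g = 2" using g by simp
  show "g \<subseteq> V" using g rn_facts(2)[OF rn] by auto
next
  fix g x y assume gin: "g \<in> und_edges (A - D)" and gxy: "g = {x, y}"
  then obtain p c where g: "g = {p, c}" and pc: "(p, c) \<in> A - D" by (auto simp: und_edges_def)
  define F where "F = und_edges (A - D) - {g}"
  define S where "S = {w. (c, w) \<in> (A - D)\<^sup>*}"
  have closed: "w \<in> S" if "(c, w) \<in> (edge_rel F)\<^sup>*" for w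
    using that
  proof (induction rule: rtrancl_induct)
    case base then show ?case by (simp add: S_def)
  next
    case (step w1 w2)
    have "{w1, w2} \<in> F" using step.hyps(2) by (simp add: edge_rel_def)
    then have inU: "{w1, w2} \<in> und_edges (A - D)" and ng0: "{w1, w2} \<noteq> g" by (auto simp: F_def)
    from inU obtain x' y' where e: "{w1, w2} = {x', y'}" and xy': "(x', y') \<in> A - D"
      unfolding und_edges_def by blast
    have ng: "{x', y'} \<noteq> g" using ng0 e by simp
    have cw1: "(c, w1) \<in> (A - D)\<^sup>*" using step.IH by (simp add: S_def)
    from e consider "w1 = x'" "w2 = y'" | "w1 = y'" "w2 = x'" by (auto simp: doubleton_eq_iff)
    then show ?case
    proof cases
      case 1
      then show ?thesis using cw1 xy' by (auto simp: S_def intro: rtrancl_into_rtrancl)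
    next
      case 2
      show ?thesis
      proof (cases "y' = c")
        case True
        then have "x' = p" using unique_parent[OF rn dc xy'] pc by simp
        then show ?thesis using ng g True by simp
      next
        case False
        then have "(c, y') \<in> (A - D)\<^sup>*" "c \<noteq> y'" using cw1 2 by auto
        then obtain z where z: "(c, z) \<in> (A - D)\<^sup>*" "(z, y') \<in> A - D"
          by (metis rtranclE)
        then have "z = x'" using unique_parent[OF rn dc _ xy'] by simp
        then show ?thesis using z 2 by (simp add: S_def)
      qed
    qed
  qed
  have pS: "p \<notin> S"
  proof
    assume "p \<in> S"
    then have "(c, p) \<in> (A - D)\<^sup>*" by (simp add: S_def)
    then have "(c, p) \<in> A\<^sup>*" using rtrancl_mono[of "A - D" A] by auto
    then have "(p, p) \<in> A\<^sup>+" using pc by (auto intro: rtrancl_into_trancl2)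
    then show False using rn_facts(3)[OF rn] by blast
  qed
  have ncp: "(c, p) \<notin> (edge_rel F)\<^sup>*"
  proof
    assume "(c, p) \<in> (edge_rel F)\<^sup>*"
    then have "p \<in> S" by (rule closed)
    then show False using pS by simp
  qed
  have ncp': "(p, c) \<notin> (edge_rel F)\<^sup>*"
  proof
    assume "(p, c) \<in> (edge_rel F)\<^sup>*"
    then have "(c, p) \<in> (edge_rel F)\<^sup>*" by (rule reach_sym)
    then show False using ncp by simp
  qed
  show "(x, y) \<notin> (edge_rel (und_edges (A - D) - {g}))\<^sup>*"
    using gxy g ncp ncp' by (auto simp: F_def doubleton_eq_iff)
qed

lemma T0_connected:
  assumes rn: "rooted_network V A r X" and dc: "deletion_choice A D"
    and u: "u \<in> V" and w: "w \<in> V"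
  shows "(u, w) \<in> (edge_rel (und_edges (A - D)))\<^sup>*"
proof -
  have sub: "A - D \<subseteq> edge_rel (und_edges (A - D))" by (auto simp: edge_rel_def und_edges_def)
  have "(r, u) \<in> (edge_rel (und_edges (A - D)))\<^sup>*" using reach_root[OF rn dc u] rtrancl_mono[OF sub] by (rule subsetD[rotated])
  moreover have "(r, w) \<in> (edge_rel (und_edges (A - D)))\<^sup>*" using reach_root[OF rn dc w] rtrancl_mono[OF sub] by (rule subsetD[rotated])
  ultimately show ?thesis using reach_sym[of r u] rtrancl_trans[of u r _ w] by simp
qed

lemma two_sides:
  assumes "(u0, w) \<in> (edge_rel F)\<^sup>*"
  shows "(u0, w) \<in> (edge_rel (F - {{u0, u1}}))\<^sup>* \<or> (u1, w) \<in> (edge_rel (F - {{u0, u1}}))\<^sup>*"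
  using assms
proof (induction rule: rtrancl_induct)
  case base then show ?case by simp
next
  case (step w1 w2)
  show ?case
  proof (cases "{w1, w2} = {u0, u1}")
    case True
    then have "w2 = u0 \<or> w2 = u1" by (auto simp: doubleton_eq_iff)
    then show ?thesis by auto
  next
    case False
    then have "{w1, w2} \<in> F - {{u0, u1}}" using step.hyps(2) by (simp add: edge_rel_def)
    then show ?thesis using step.IH edge_step[of u0 w1 "F - {{u0, u1}}" w2] edge_step[of u1 w1 "F - {{u0, u1}}" w2] by blast
  qed
qed



lemma circ_lemma:
  fixes xs :: "'v list" and S :: "'v set"
  assumes ex1: "\<exists>k<length xs. xs ! k \<in> S" and ex2: "\<exists>k<length xs. xs ! k \<notin> S"
    and noint: "\<And>k1 k2 k3 k4. k1 < k2 \<Longrightarrow> k2 < k3 \<Longrightarrow> k3 < k4 \<Longrightarrow> k4 < length xs \<Longrightarrow>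
       (xs ! k1 \<in> S \<longleftrightarrow> xs ! k3 \<in> S) \<Longrightarrow> (xs ! k2 \<in> S \<longleftrightarrow> xs ! k4 \<in> S) \<Longrightarrow>
       (xs ! k1 \<in> S \<longleftrightarrow> xs ! k2 \<in> S)"
  shows "\<exists>i j. i < length xs \<and> j < length xs \<and> i \<noteq> j \<and> {set xs \<inter> S, set xs - S} = circ_split xs i j"
proof -
  define n where "n = length xs"
  have n0: "0 < n" using ex1 n_def by auto
  define B where "B = (xs ! 0 \<in> S)"
  define J where "J = {k. k < n \<and> (xs ! k \<in> S) \<noteq> B}"
  have Jne: "J \<noteq> {}" using ex1 ex2 by (cases B) (auto simp: J_def n_def)
  have fJ: "finite J" by (simp add: J_def)
  define j where "j = Min J"
  define m where "m = Max J"
  have jJ: "j \<in> J" and mJ: "m \<in> J" using Jne fJ by (auto simp: j_def m_def)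
  have j0: "0 < j" using jJ by (auto simp: J_def B_def intro: Nat.gr0I)
  have jm: "j \<le> m" using fJ jJ by (simp add: m_def)
  have mn: "m < n" using mJ by (simp add: J_def)
  have Jeq: "J = {j..m}"
  proof
    show "J \<subseteq> {j..m}" using fJ by (auto simp: j_def m_def)
  next
    show "{j..m} \<subseteq> J"
    proof
      fix k assume k: "k \<in> {j..m}"
      show "k \<in> J"
      proof (rule ccontr)
        assume kJ: "k \<notin> J"
        have kn: "k < n" using k mn by auto
        then have kB: "(xs ! k \<in> S) = B" using kJ by (auto simp: J_def)
        have "k \<noteq> j" "k \<noteq> m" using kJ jJ mJ by auto
        then have o: "j < k" "k < m" using k by auto
        have "(xs ! 0 \<in> S \<longleftrightarrow> xs ! j \<in> S)"
          by (rule noint[OF j0 o mn[unfolded n_def]]) (use kB jJ mJ in \<open>auto simp: B_def J_def\<close>)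
        then show False using jJ by (auto simp: J_def B_def)
      qed
    qed
  qed
  define cp where "cp = circ_part xs (j - 1) m"
  have "j - 1 < m" using j0 jm by simp
  have cpeq: "cp = (\<lambda>k. xs ! k) ` J"
  proof -
    have "cp = {xs ! (k mod n) | k. j - 1 < k \<and> k \<le> m}"
      using j0 jm \<open>j - 1 < m\<close> by (simp add: cp_def circ_part_def n_def)
    also have "\<dots> = {xs ! k | k. j \<le> k \<and> k \<le> m}"
    proof -
      have "\<And>k. j - 1 < k \<and> k \<le> m \<longleftrightarrow> j \<le> k \<and> k \<le> m" using j0 by auto
      moreover have "\<And>k. k \<le> m \<Longrightarrow> k mod n = k" using mn by simp
      ultimately show ?thesis by (metis (no_types, lifting))
    qed
    also have "\<dots> = (\<lambda>k. xs ! k) ` J" unfolding Jeq by auto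
    finally show ?thesis .
  qed
  have setxs: "set xs = (\<lambda>k. xs ! k) ` {k. k < n}" by (auto simp: n_def in_set_conv_nth)
  have s1: "set xs - S = (\<lambda>k. xs ! k) ` {k. k < n \<and> xs ! k \<notin> S}" unfolding setxs by auto
  have s2: "set xs \<inter> S = (\<lambda>k. xs ! k) ` {k. k < n \<and> xs ! k \<in> S}" unfolding setxs by auto
  have res: "{set xs \<inter> S, set xs - S} = {cp, set xs - cp}"
  proof (cases B)
    case True
    then have "set xs - S = cp" unfolding s1 cpeq J_def by simp
    moreover have "set xs \<inter> S = set xs - (set xs - S)" by auto
    ultimately show ?thesis by (simp add: insert_commute)
  next
    case False
    then have "set xs \<inter> S = cp" unfolding s2 cpeq J_def by simp
    moreover have "set xs - S = set xs - (set xs \<inter> S)" by auto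
    ultimately show ?thesis by simp
  qed
  show ?thesis
    by (rule exI[of _ "j - 1"], rule exI[of _ m])
       (use res j0 jm mn in \<open>auto simp: circ_split_def cp_def n_def\<close>)
qed

lemma path_in_drawing:
  fixes pos :: "'v \<Rightarrow> complex" and \<gamma> :: "'v set \<Rightarrow> real \<Rightarrow> complex"
  assumes emb: "\<forall>e\<in>E. path (\<gamma> e) \<and> {pathstart (\<gamma> e), pathfinish (\<gamma> e)} = pos ` e"
    and H: "H \<subseteq> E" and r: "(u, w) \<in> (edge_rel H)\<^sup>*"
  shows "\<exists>p. path p \<and> pathstart p = pos u \<and> pathfinish p = pos w \<and>
     path_image p \<subseteq> insert (pos u) (\<Union>{path_image (\<gamma> g) | g. g \<in> H \<and> g \<subseteq> component H u})"
  using r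
proof (induction rule: rtrancl_induct)
  case base
  show ?case by (rule exI[of _ "\<lambda>t. pos u"]) (auto simp: path_def pathstart_def pathfinish_def path_image_def)
next
  case (step w1 w2)
  then obtain p1 where p1: "path p1" "pathstart p1 = pos u" "pathfinish p1 = pos w1"
    "path_image p1 \<subseteq> insert (pos u) (\<Union>{path_image (\<gamma> g) | g. g \<in> H \<and> g \<subseteq> component H u})"
    by blast
  define g where "g = {w1, w2}"
  have gH: "g \<in> H" using step.hyps(2) by (simp add: edge_rel_def g_def)
  have r2: "(u, w2) \<in> (edge_rel H)\<^sup>*" using step.hyps by auto
  have gK: "g \<subseteq> component H u" using step.hyps(1) r2 by (auto simp: g_def in_component)
  have gE: "g \<in> E" using gH H by auto
  have pg: "path (\<gamma> g)" and se0: "{pathstart (\<gamma> g), pathfinish (\<gamma> g)} = pos ` g"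
    using emb gE by auto
  have se: "{pathstart (\<gamma> g), pathfinish (\<gamma> g)} = {pos w1, pos w2}"
    using se0 by (simp add: g_def)
  obtain q where q: "path q" "pathstart q = pos w1" "pathfinish q = pos w2" "path_image q = path_image (\<gamma> g)"
  proof (cases "pathstart (\<gamma> g) = pos w1")
    case True
    then have "pathfinish (\<gamma> g) = pos w2" using se by (auto simp: doubleton_eq_iff)
    then show ?thesis using that[of "\<gamma> g"] pg True by simp
  next
    case False
    then have "pathstart (\<gamma> g) = pos w2" "pathfinish (\<gamma> g) = pos w1" using se by (auto simp: doubleton_eq_iff)
    then show ?thesis using that[of "reversepath (\<gamma> g)"] pg by simp
  qed
  have "path_image q \<subseteq> \<Union>{path_image (\<gamma> g) | g. g \<in> H \<and> g \<subseteq> component H u}"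
    using q(4) gH gK by blast
  then show ?case using p1 q
    by (intro exI[of _ "p1 +++ q"]) (auto simp: path_image_join)
qed



lemma set_aux: "A \<subseteq> B \<union> {x} \<Longrightarrow> C \<subseteq> B \<Longrightarrow> D \<subseteq> B \<union> {y} \<Longrightarrow> A \<union> (C \<union> D) \<subseteq> B \<union> {x, y}"
  by blast

lemma core:
  assumes emb: "induces_circular_order V E xs" and setxs: "set xs \<subseteq> V" and H: "H \<subseteq> E"
    and k: "k1 < k2" "k2 < k3" "k3 < k4" "k4 < length xs"
    and ac: "(xs ! k1, xs ! k3) \<in> (edge_rel H)\<^sup>*" and bd: "(xs ! k2, xs ! k4) \<in> (edge_rel H)\<^sup>*"
    and nab: "(xs ! k1, xs ! k2) \<notin> (edge_rel H)\<^sup>*"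
  shows False
proof -
  obtain pos :: "'a \<Rightarrow> complex" and \<gamma> :: "'a set \<Rightarrow> real \<Rightarrow> complex"
    and \<delta> :: "nat \<Rightarrow> real \<Rightarrow> complex" and R :: real and \<theta> :: "nat \<Rightarrow> real" where
    inj: "inj_on pos V" and
    ge: "\<forall>e \<in> E. arc (\<gamma> e) \<and> {pathstart (\<gamma> e), pathfinish (\<gamma> e)} = pos ` e" and
    gv: "\<forall>e \<in> E. \<forall>v \<in> V. pos v \<in> path_image (\<gamma> e) \<longrightarrow> v \<in> e" and
    gg: "\<forall>e \<in> E. \<forall>e' \<in> E. e \<noteq> e' \<longrightarrow> path_image (\<gamma> e) \<inter> path_image (\<gamma> e') \<subseteq> pos ` (e \<inter> e')" and
    bl: "pos ` V \<union> (\<Union>e \<in> E. path_image (\<gamma> e)) \<subseteq> ball 0 R" and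
    dk: "\<forall>k < length xs. arc (\<delta> k) \<and> pathstart (\<delta> k) = pos (xs ! k) \<and>
          pathfinish (\<delta> k) = complex_of_real R * cis (\<theta> k) \<and>
          path_image (\<delta> k) \<inter> (pos ` V \<union> (\<Union>e \<in> E. path_image (\<gamma> e))) = {pos (xs ! k)} \<and>
          path_image (\<delta> k) - {pathfinish (\<delta> k)} \<subseteq> ball 0 R \<and>
          0 \<le> \<theta> k \<and> \<theta> k < 2 * pi" and
    dd: "\<forall>k l. k < l \<and> l < length xs \<longrightarrow>
          path_image (\<delta> k) \<inter> path_image (\<delta> l) = {} \<and> \<theta> k < \<theta> l"
    using emb unfolding induces_circular_order_def by (elim exE conjE) (rule that; assumption)
  define Draw where "Draw = pos ` V \<union> (\<Union>e \<in> E. path_image (\<gamma> e))"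
  define a where "a = xs ! k1"
  define b where "b = xs ! k2"
  define c where "c = xs ! k3"
  define d where "d = xs ! k4"
  have kl: "k1 < length xs" "k2 < length xs" "k3 < length xs" "k4 < length xs" using k by auto
  have inV: "a \<in> V" "b \<in> V" "c \<in> V" "d \<in> V"
    using setxs kl nth_mem unfolding a_def b_def c_def d_def by blast+
  define K1 where "K1 = component H a"
  define K2 where "K2 = component H b"
  have disjK: False if "w \<in> K1" "w \<in> K2" for w
  proof -
    have "(a, w) \<in> (edge_rel H)\<^sup>*" "(b, w) \<in> (edge_rel H)\<^sup>*" using that by (auto simp: K1_def K2_def in_component)
    then have "(a, b) \<in> (edge_rel H)\<^sup>*" using reach_sym[of b w] rtrancl_trans[of a w _ b] by simp
    then show False using nab by (simp add: a_def b_def)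
  qed
  have aK1: "a \<in> K1" and bK2: "b \<in> K2" by (auto simp: K1_def K2_def in_component)
  have ge': "\<forall>e\<in>E. path (\<gamma> e) \<and> {pathstart (\<gamma> e), pathfinish (\<gamma> e)} = pos ` e"
    using ge arc_imp_path by blast
  define PA where "PA = insert (pos a) (\<Union>{path_image (\<gamma> g) | g. g \<in> H \<and> g \<subseteq> K1})"
  define QB where "QB = insert (pos b) (\<Union>{path_image (\<gamma> g) | g. g \<in> H \<and> g \<subseteq> K2})"
  obtain P where P: "path P" "pathstart P = pos a" "pathfinish P = pos c" "path_image P \<subseteq> PA"
    using path_in_drawing[OF ge' H ac] unfolding PA_def K1_def a_def c_def by blast
  obtain Q where Q: "path Q" "pathstart Q = pos b" "pathfinish Q = pos d" "path_image Q \<subseteq> QB"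
    using path_in_drawing[OF ge' H bd] unfolding QB_def K2_def b_def d_def by blast
  have PAD: "PA \<subseteq> Draw" using inV H by (auto simp: PA_def Draw_def)
  have QBD: "QB \<subseteq> Draw" using inV H by (auto simp: QB_def Draw_def)
  have vert: False if "pos v \<in> path_image (\<gamma> g)" "v \<in> V" "g \<in> H" "g \<subseteq> K" "v \<in> K'"
      "K = K1 \<and> K' = K2 \<or> K = K2 \<and> K' = K1" for v g K K'
  proof -
    have "v \<in> g" using gv that H by blast
    then show False using that disjK by blast
  qed
  have PQ: "PA \<inter> QB = {}"
  proof (rule ccontr)
    assume "PA \<inter> QB \<noteq> {}"
    then obtain z where zP: "z \<in> PA" and zQ: "z \<in> QB" by blast
    show False
    proof (cases "z = pos a")
      case za: True
      show False
      proof (cases "z = pos b")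
        case True
        then have "a = b" using za inj inV by (auto dest: inj_onD)
        then show False using aK1 bK2 disjK by blast
      next
        case False
        then obtain g where "g \<in> H" "g \<subseteq> K2" "pos a \<in> path_image (\<gamma> g)" using zQ za by (auto simp: QB_def)
        then show False using vert[of a g K2 K1] inV aK1 by blast
      qed
    next
      case zna: False
      then obtain g1 where g1: "g1 \<in> H" "g1 \<subseteq> K1" "z \<in> path_image (\<gamma> g1)" using zP by (auto simp: PA_def)
      show False
      proof (cases "z = pos b")
        case True
        then show False using vert[of b g1 K1 K2] g1 inV bK2 by blast
      next
        case False
        then obtain g2 where g2: "g2 \<in> H" "g2 \<subseteq> K2" "z \<in> path_image (\<gamma> g2)" using zQ by (auto simp: QB_def)
        show False
        proof (cases "g1 = g2")
          case True
          have "pos ` g1 \<noteq> {}"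
          proof -
            have "g1 \<in> E" using g1 H by auto
            then have "{pathstart (\<gamma> g1), pathfinish (\<gamma> g1)} = pos ` g1" using ge by simp
            then show ?thesis by (metis empty_not_insert)
          qed
          then obtain w where "w \<in> g1" by blast
          then show False using True g1 g2 disjK by blast
        next
          case False
          then have "z \<in> pos ` (g1 \<inter> g2)" using gg g1 g2 H by blast
          then obtain w where "w \<in> g1" "w \<in> g2" by blast
          then show False using g1 g2 disjK by blast
        qed
      qed
    qed
  qed
  have aPA: "pos a \<in> PA" by (simp add: PA_def)
  have cPA: "pos c \<in> PA" using P pathfinish_in_path_image[of P] by auto
  have bQB: "pos b \<in> QB" by (simp add: QB_def)
  have dQB: "pos d \<in> QB" using Q pathfinish_in_path_image[of Q] by auto
  have D1: "\<And>k. k < length xs \<Longrightarrow> path (\<delta> k)" using dk arc_imp_path by blast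
  have D2: "\<And>k. k < length xs \<Longrightarrow> pathstart (\<delta> k) = pos (xs ! k)" using dk by blast
  have D3: "\<And>k. k < length xs \<Longrightarrow> pathfinish (\<delta> k) = complex_of_real R * cis (\<theta> k)" using dk by blast
  have D4: "\<And>k. k < length xs \<Longrightarrow> path_image (\<delta> k) \<inter> Draw = {pos (xs ! k)}"
    using dk unfolding Draw_def by blast
  have D5: "\<And>k. k < length xs \<Longrightarrow> path_image (\<delta> k) - {pathfinish (\<delta> k)} \<subseteq> ball 0 R" using dk by blast
  have D6: "\<And>k. k < length xs \<Longrightarrow> 0 \<le> \<theta> k" using dk by blast
  have D7: "\<And>k. k < length xs \<Longrightarrow> \<theta> k < 2 * pi" using dk by blast
  have DD: "\<And>k l. k < l \<Longrightarrow> l < length xs \<Longrightarrow> path_image (\<delta> k) \<inter> path_image (\<delta> l) = {} \<and> \<theta> k < \<theta> l"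
    using dd by blast
  have Rpos: "R > 0"
  proof -
    have "pos a \<in> ball 0 R" using bl inV by auto
    then have "dist 0 (pos a) < R" by simp
    then show ?thesis using zero_le_dist[of 0 "pos a"] by linarith
  qed
  define G1 where "G1 = reversepath (\<delta> k1) +++ (P +++ \<delta> k3)"
  define G2 where "G2 = reversepath (\<delta> k2) +++ (Q +++ \<delta> k4)"
  have j1: "pathfinish (reversepath (\<delta> k1)) = pathstart (P +++ \<delta> k3)"
    using D2[OF kl(1)] P(2) by (simp add: a_def)
  have j2: "pathfinish P = pathstart (\<delta> k3)" using D2[OF kl(3)] P(3) by (simp add: c_def)
  have j3: "pathfinish (reversepath (\<delta> k2)) = pathstart (Q +++ \<delta> k4)"
    using D2[OF kl(2)] Q(2) by (simp add: b_def)
  have j4: "pathfinish Q = pathstart (\<delta> k4)" using D2[OF kl(4)] Q(3) by (simp add: d_def)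
  have pG1: "path G1" unfolding G1_def
    using j1 j2 D1[OF kl(1)] D1[OF kl(3)] P(1) by (simp add: path_join)
  have pG2: "path G2" unfolding G2_def
    using j3 j4 D1[OF kl(2)] D1[OF kl(4)] Q(1) by (simp add: path_join)
  have sG1: "pathstart G1 = complex_of_real R * cis (\<theta> k1)" "pathfinish G1 = complex_of_real R * cis (\<theta> k3)"
    unfolding G1_def using D3[OF kl(1)] D3[OF kl(3)] by simp_all
  have sG2: "pathstart G2 = complex_of_real R * cis (\<theta> k2)" "pathfinish G2 = complex_of_real R * cis (\<theta> k4)"
    unfolding G2_def using D3[OF kl(2)] D3[OF kl(4)] by simp_all
  have iG1: "path_image G1 = path_image (\<delta> k1) \<union> (path_image P \<union> path_image (\<delta> k3))"
    unfolding G1_def using j1 j2 by (simp add: path_image_join path_image_reversepath)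
  have iG2: "path_image G2 = path_image (\<delta> k2) \<union> (path_image Q \<union> path_image (\<delta> k4))"
    unfolding G2_def using j3 j4 by (simp add: path_image_join path_image_reversepath)
  have ballD: "Draw \<subseteq> ball 0 R" using bl by (simp add: Draw_def)
  have bd1: "path_image (\<delta> k) \<subseteq> ball 0 R \<union> {pathfinish (\<delta> k)}" if "k < length xs" for k
    using D5[OF that] by (simp add: Diff_subset_conv Un_commute)
  have i1: "path_image G1 \<subseteq> ball 0 R \<union> {pathstart G1, pathfinish G1}"
  proof -
    have Pb: "path_image P \<subseteq> ball 0 R" using P(4) PAD ballD by blast
    have e: "pathstart G1 = pathfinish (\<delta> k1)" "pathfinish G1 = pathfinish (\<delta> k3)"
      unfolding G1_def by simp_all
    show ?thesis unfolding iG1 e by (rule set_aux[OF bd1[OF kl(1)] Pb bd1[OF kl(3)]])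
  qed
  have i2: "path_image G2 \<subseteq> ball 0 R \<union> {pathstart G2, pathfinish G2}"
  proof -
    have Pb: "path_image Q \<subseteq> ball 0 R" using Q(4) QBD ballD by blast
    have e: "pathstart G2 = pathfinish (\<delta> k2)" "pathfinish G2 = pathfinish (\<delta> k4)"
      unfolding G2_def by simp_all
    show ?thesis unfolding iG2 e by (rule set_aux[OF bd1[OF kl(2)] Pb bd1[OF kl(4)]])
  qed
  have th: "\<theta> k1 < \<theta> k2" "\<theta> k2 < \<theta> k3" "\<theta> k3 < \<theta> k4"
    using DD[OF k(1) kl(2)] DD[OF k(2) kl(3)] DD[OF k(3) kl(4)] by auto
  have "path_image G1 \<inter> path_image G2 \<noteq> {}"
    by (rule disc_cross[OF Rpos D6[OF kl(1)] th D7[OF kl(4)] pG1 pG2 sG1 sG2 i1 i2])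
  then obtain z where z1: "z \<in> path_image G1" and z2: "z \<in> path_image G2" by blast
  have k14: "k1 < k4" "k2 < k3" using k by auto
  have e12: "path_image (\<delta> k1) \<inter> path_image (\<delta> k2) = {}" using DD[OF k(1) kl(2)] by simp
  have e14: "path_image (\<delta> k1) \<inter> path_image (\<delta> k4) = {}" using DD[OF k14(1) kl(4)] by simp
  have e32: "path_image (\<delta> k2) \<inter> path_image (\<delta> k3) = {}" using DD[OF k(2) kl(3)] by simp
  have e34: "path_image (\<delta> k3) \<inter> path_image (\<delta> k4) = {}" using DD[OF k(3) kl(4)] by simp
  have pa: "pos a \<notin> QB" "pos c \<notin> QB" "pos b \<notin> PA" "pos d \<notin> PA"
    using PQ aPA cPA bQB dQB by auto
  have A1: "z \<in> path_image (\<delta> k1) \<or> z \<in> PA \<or> z \<in> path_image (\<delta> k3)" using z1 iG1 P(4) by blast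
  have A2: "z \<in> path_image (\<delta> k2) \<or> z \<in> QB \<or> z \<in> path_image (\<delta> k4)" using z2 iG2 Q(4) by blast
  have x1: "z \<notin> path_image (\<delta> k1) \<or> z \<notin> QB"
  proof (rule ccontr)
    assume "\<not> (z \<notin> path_image (\<delta> k1) \<or> z \<notin> QB)"
    then have "z \<in> path_image (\<delta> k1) \<inter> Draw" "z \<in> QB" using QBD by auto
    then have "z = pos a" "z \<in> QB" using D4[OF kl(1)] unfolding a_def by auto
    then show False using pa(1) by simp
  qed
  have x2: "z \<notin> path_image (\<delta> k3) \<or> z \<notin> QB"
  proof (rule ccontr)
    assume "\<not> (z \<notin> path_image (\<delta> k3) \<or> z \<notin> QB)"
    then have "z \<in> path_image (\<delta> k3) \<inter> Draw" "z \<in> QB" using QBD by auto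
    then have "z = pos c" "z \<in> QB" using D4[OF kl(3)] unfolding c_def by auto
    then show False using pa(2) by simp
  qed
  have x3: "z \<notin> path_image (\<delta> k2) \<or> z \<notin> PA"
  proof (rule ccontr)
    assume "\<not> (z \<notin> path_image (\<delta> k2) \<or> z \<notin> PA)"
    then have "z \<in> path_image (\<delta> k2) \<inter> Draw" "z \<in> PA" using PAD by auto
    then have "z = pos b" "z \<in> PA" using D4[OF kl(2)] unfolding b_def by auto
    then show False using pa(3) by simp
  qed
  have x4: "z \<notin> path_image (\<delta> k4) \<or> z \<notin> PA"
  proof (rule ccontr)
    assume "\<not> (z \<notin> path_image (\<delta> k4) \<or> z \<notin> PA)"
    then have "z \<in> path_image (\<delta> k4) \<inter> Draw" "z \<in> PA" using PAD by auto
    then have "z = pos d" "z \<in> PA" using D4[OF kl(4)] unfolding d_def by auto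
    then show False using pa(4) by simp
  qed
  show False using A1 A2 x1 x2 x3 x4 e12 e14 e32 e34 PQ by blast
qed



lemma und_edges_mono: "A' \<subseteq> A \<Longrightarrow> und_edges A' \<subseteq> und_edges A"
  by (auto simp: und_edges_def)

lemma congruent_main:
  assumes rn: "rooted_network V A r X" and ico: "induced_circular_order V A X xs"
  shows "congruent (displayed_splits V A X) xs"
  unfolding congruent_def
proof
  fix s assume "s \<in> displayed_splits V A X"
  then obtain T where sT: "s \<in> tree_splits X T" and dT: "displayed_tree V A X T"
    by (auto simp: displayed_splits_def)
  from dT obtain D where dc: "deletion_choice A D"
    and red: "(reduce_step X)\<^sup>*\<^sup>* (V, und_edges (A - D)) T" and irr: "\<not> (\<exists>T'. reduce_step X T T')"
    by (auto simp: displayed_tree_def)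
  define F0 where "F0 = und_edges (A - D)"
  have inv0: "inv_graph V F0" using T0_inv[OF rn dc] by (simp add: F0_def)
  have ro: "inv_graph (fst T) (snd T) \<and> tree_splits X T \<subseteq> tree_splits X (V, F0)"
    using reduce_ok[of X "(V, F0)" T] red inv0 by (simp add: F0_def)
  obtain W F where TWF: "T = (W, F)" by (cases T)
  have invT: "inv_graph W F" using ro TWF by simp
  have irr': "\<not> (\<exists>T'. reduce_step X (W, F) T')" using irr TWF by simp
  from sT obtain f x where s1: "s = {X \<inter> component (F - {f}) x, X - component (F - {f}) x}"
    and fx: "f \<in> F" "x \<in> f" by (auto simp: tree_splits_def TWF)
  have nt1: "X \<inter> component (F - {f}) x \<noteq> {}" "X - component (F - {f}) x \<noteq> {}"
    using nontriv[OF invT irr' fx] by auto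
  have "s \<in> tree_splits X (V, F0)" using ro sT by auto
  then obtain e0 u0 where s0: "s = {X \<inter> component (F0 - {e0}) u0, X - component (F0 - {e0}) u0}"
    and e0: "e0 \<in> F0" "u0 \<in> e0" by (auto simp: tree_splits_def)
  define H where "H = F0 - {e0}"
  define C0 where "C0 = component H u0"
  have ne: "X \<inter> C0 \<noteq> {}" "X - C0 \<noteq> {}"
    using s0 s1 nt1 unfolding C0_def H_def by (auto simp: doubleton_eq_iff)
  have "card e0 = 2" using inv0 e0 by (auto simp: inv_graph_def)
  then obtain u1 where e0u: "e0 = {u0, u1}" "u1 \<noteq> u0" using card2_obtain e0(2) by metis
  have e0V: "u0 \<in> V" using inv0 e0 by (auto simp: inv_graph_def)
  have co: "circular_order X xs" and emb: "induces_circular_order V (und_edges A) xs"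
    using ico by (auto simp: induced_circular_order_def)
  have setxs: "set xs = X" using co by (simp add: circular_order_def)
  have XV: "X \<subseteq> V" using rn_facts(6)[OF rn] by auto
  have HE: "H \<subseteq> und_edges A" unfolding H_def F0_def using und_edges_mono[of "A - D" A] by auto
  have other: "(u1, w) \<in> (edge_rel H)\<^sup>*" if "w \<in> X" "w \<notin> C0" for w
  proof -
    have "(u0, w) \<in> (edge_rel F0)\<^sup>*" using T0_connected[OF rn dc e0V] that XV by (auto simp: F0_def)
    from two_sides[OF this, of u1] that show ?thesis by (auto simp: H_def C0_def e0u in_component)
  qed
  have inC: "(u0, w) \<in> (edge_rel H)\<^sup>*" if "w \<in> C0" for w using that by (simp add: C0_def in_component)
  have same: "(p, q) \<in> (edge_rel H)\<^sup>*" if "p \<in> X" "q \<in> X" "(p \<in> C0) = (q \<in> C0)" for p q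
  proof (cases "p \<in> C0")
    case True
    then have "(u0, p) \<in> (edge_rel H)\<^sup>*" "(u0, q) \<in> (edge_rel H)\<^sup>*" using inC that by auto
    then show ?thesis using reach_sym[of u0 p] rtrancl_trans[of p u0 _ q] by simp
  next
    case False
    then have "(u1, p) \<in> (edge_rel H)\<^sup>*" "(u1, q) \<in> (edge_rel H)\<^sup>*" using other that by auto
    then show ?thesis using reach_sym[of u1 p] rtrancl_trans[of p u1 _ q] by simp
  qed
  have diff: "(p, q) \<notin> (edge_rel H)\<^sup>*" if "(p \<in> C0) \<noteq> (q \<in> C0)" for p q
  proof
    assume pq: "(p, q) \<in> (edge_rel H)\<^sup>*"
    show False
    proof (cases "p \<in> C0")
      case True
      then have "(u0, q) \<in> (edge_rel H)\<^sup>*" using inC pq by (meson rtrancl_trans)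
      then show False using that True by (simp add: C0_def in_component)
    next
      case False
      then have "q \<in> C0" using that by simp
      have "(q, p) \<in> (edge_rel H)\<^sup>*" using pq by (rule reach_sym)
      then have "(u0, p) \<in> (edge_rel H)\<^sup>*" using inC[OF \<open>q \<in> C0\<close>] by (meson rtrancl_trans)
      then show False using False by (simp add: C0_def in_component)
    qed
  qed
  have nthX: "xs ! k \<in> X" if "k < length xs" for k using that setxs nth_mem by blast
  have circ: "\<exists>i j. i < length xs \<and> j < length xs \<and> i \<noteq> j \<and> {set xs \<inter> C0, set xs - C0} = circ_split xs i j"
  proof (rule circ_lemma)
    show "\<exists>k<length xs. xs ! k \<in> C0" using ne(1) setxs by (auto simp: in_set_conv_nth)
    show "\<exists>k<length xs. xs ! k \<notin> C0" using ne(2) setxs by (auto simp: in_set_conv_nth)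
  next
    fix k1 k2 k3 k4 assume k: "k1 < k2" "k2 < k3" "k3 < k4" "k4 < length xs"
      and b13: "(xs ! k1 \<in> C0) = (xs ! k3 \<in> C0)" and b24: "(xs ! k2 \<in> C0) = (xs ! k4 \<in> C0)"
    show "(xs ! k1 \<in> C0) = (xs ! k2 \<in> C0)"
    proof (rule ccontr)
      assume b12: "(xs ! k1 \<in> C0) \<noteq> (xs ! k2 \<in> C0)"
      have kl: "k1 < length xs" "k2 < length xs" "k3 < length xs" using k by auto
      show False
      proof (rule core[OF emb _ HE k])
        show "set xs \<subseteq> V" using setxs XV by simp
        show "(xs ! k1, xs ! k3) \<in> (edge_rel H)\<^sup>*" using same nthX kl b13 by simp
        show "(xs ! k2, xs ! k4) \<in> (edge_rel H)\<^sup>*" using same nthX kl k(4) b24 by simp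
        show "(xs ! k1, xs ! k2) \<notin> (edge_rel H)\<^sup>*" using diff b12 by simp
      qed
    qed
  qed
  have "s = {set xs \<inter> C0, set xs - C0}" using s0 setxs by (simp add: C0_def H_def Int_commute)
  then show "\<exists>i j. i < length xs \<and> j < length xs \<and> i \<noteq> j \<and> s = circ_split xs i j" using circ by simp
qed

theorem proposition2p9:
  fixes V :: "'v set" and A :: "('v \<times> 'v) set" and r :: 'v and X :: "'v set"
  assumes "rooted_network V A r X"
    and "outer_labeled_planar V A X"
  shows "circular_split_system X (displayed_splits V A X) \<and>
         (\<forall>xs. induced_circular_order V A X xs \<longrightarrow> congruent (displayed_splits V A X) xs)"
proof
  show "\<forall>xs. induced_circular_order V A X xs \<longrightarrow> congruent (displayed_splits V A X) xs"
    using congruent_main[OF assms(1)] by blast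
  obtain xs where "induced_circular_order V A X xs" using assms(2) by (auto simp: outer_labeled_planar_def)
  then show "circular_split_system X (displayed_splits V A X)"
    using congruent_main[OF assms(1)] by (auto simp: circular_split_system_def induced_circular_order_def)
qed

end
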